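(* For a positive integer $M$, let $\mathcal O(M)$ be the set of distinct orbits $o(\mathbf{x})$ with $\mathbf{x}\in[0,M]^2\cap\mathbb{Z}^2$. Then: - $\frac1{\#\mathcal O(M)}\sum_{o\in\mathcal O(M)}\operatorname{diam}_E(o)=\frac{7\sqrt2}{6}M+O(1)$; - the average over $\mathcal O(M)$ of the side length of the smallest axis-parallel square containing the orbit is $\frac76M+O(1)$; - the average over $\mathcal O(M)$ of $\operatorname{length}(o)$ is $\frac{14}{3}M+O(1)$.
   Context: Define $\mathcal K_1(x_1,x_2)=(-x_1+x_2,x_2)$ and $\mathcal K_2(x_1,x_2)=(x_1,x_1-x_2)$ on $\mathbb{Z}^2$. The orbit $o(\mathbf{x})$ is the set of points obtained from $\mathbf{x}$ by repeated application of $\mathcal K_1,\mathcal K_2$: $(x_1,x_2)$, $(-x_1+x_2,x_2)$, $(-x_1+x_2,-x_1)$, $(-x_2,-x_1)$, $(-x_2,x_1-x_2)$, $(x_1,x_1-x_2)$. Definitions of the averaged quantities: - $\operatorname{diam}_E(o)$ is the maximum Euclidean distance between two points of $o$. - $\operatorname{length}(o(\mathbf{x}))=2\big(|2x_1-x_2|+|x_1+x_2|+|2x_2-x_1|\big)$ is the Euclidean length of the closed path through the six points in the listed order. - The smallest axis-parallel rectangle containing $o(\mathbf{x})$ is a square of side $\max\{|x_1+x_2|,|x_1-2x_2|,|x_2-2x_1|\}$. *)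

theory Defs
  imports Complex_Main
begin

type_synonym pt = "int \<times> int"

definition K1 :: "pt \<Rightarrow> pt" where
  "K1 p = (- fst p + snd p, snd p)"

definition K2 :: "pt \<Rightarrow> pt" where
  "K2 p = (fst p, fst p - snd p)"

definition Kstep :: "(pt \<times> pt) set" where
  "Kstep = {(p, K1 p) | p. True} \<union> {(p, K2 p) | p. True}"

definition orbit :: "pt \<Rightarrow> pt set" where
  "orbit x = {y. (x, y) \<in> Kstep\<^sup>*}"

definition orbits :: "nat \<Rightarrow> pt set set" where
  "orbits M = orbit ` ({0..int M} \<times> {0..int M})"

definition eucl_dist :: "pt \<Rightarrow> pt \<Rightarrow> real" where
  "eucl_dist p q = sqrt ((real_of_int (fst p - fst q))\<^sup>2 + (real_of_int (snd p - snd q))\<^sup>2)"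

definition diamE :: "pt set \<Rightarrow> real" where
  "diamE o' = Max {eucl_dist p q | p q. p \<in> o' \<and> q \<in> o'}"

definition square_side :: "pt set \<Rightarrow> real" where
  "square_side o' = real_of_int (max (Max (fst ` o') - Min (fst ` o')) (Max (snd ` o') - Min (snd ` o')))"

text \<open>Length of the closed path through the six orbit points, via a representative.\<close>
definition orbit_length :: "pt set \<Rightarrow> real" where
  "orbit_length o' = (THE l. \<exists>x1 x2. o' = orbit (x1, x2) \<and>
      l = real_of_int (2 * (\<bar>2*x1 - x2\<bar> + \<bar>x1 + x2\<bar> + \<bar>2*x2 - x1\<bar>)))"

definition avg_orbits :: "(pt set \<Rightarrow> real) \<Rightarrow> nat \<Rightarrow> real" where
  "avg_orbits f M = (\<Sum>o'\<in>orbits M. f o') / real (card (orbits M))"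

end

theory Submission
  imports Defs
begin

definition O6 :: "pt \<Rightarrow> pt set" where
  "O6 x = (case x of (a,b) \<Rightarrow> {(a,b),(b-a,b),(b-a,-a),(-b,-a),(-b,a-b),(a,a-b)})"

definition sfun :: "pt \<Rightarrow> int" where
  "sfun x = (case x of (a,b) \<Rightarrow> max \<bar>a+b\<bar> (max \<bar>a-2*b\<bar> \<bar>b-2*a\<bar>))"

lemma orbit_sub: "(x,y) \<in> Kstep\<^sup>* \<Longrightarrow> y \<in> O6 x"
proof (induction rule: rtrancl_induct)
  case base
  then show ?case by (cases x) (simp add: O6_def)
next
  case (step y z)
  obtain a b where x: "x = (a,b)" by (cases x)
  from step(2) have z: "z = K1 y \<or> z = K2 y" by (auto simp: Kstep_def)
  from step(3) have "y = (a,b) \<or> y = (b-a,b) \<or> y = (b-a,-a) \<or> y = (-b,-a) \<or> y = (-b,a-b) \<or> y = (a,a-b)"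
    by (simp add: O6_def x)
  then show ?case using z
    by (elim disjE) (simp_all add: O6_def x K1_def K2_def)
qed

lemma orbit_sup: "y \<in> O6 x \<Longrightarrow> (x,y) \<in> Kstep\<^sup>*"
proof -
  obtain a b where x: "x = (a,b)" by (cases x)
  have s1: "\<And>p. (p, K1 p) \<in> Kstep" "\<And>p. (p, K2 p) \<in> Kstep" by (auto simp: Kstep_def)
  have k: "K1 (a,b) = (b-a,b)" "K2 (b-a,b) = (b-a,-a)" "K1 (b-a,-a) = (-b,-a)"
     "K2 (-b,-a) = (-b,a-b)" "K1 (-b,a-b) = (a,a-b)" by (simp_all add: K1_def K2_def)
  have r2: "(x, (b-a,b)) \<in> Kstep\<^sup>*" using s1(1)[of "(a,b)"] x k by auto
  have r3: "(x, (b-a,-a)) \<in> Kstep\<^sup>*" using r2 s1(2)[of "(b-a,b)"] k by (metis rtrancl_into_rtrancl)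
  have r4: "(x, (-b,-a)) \<in> Kstep\<^sup>*" using r3 s1(1)[of "(b-a,-a)"] k by (metis rtrancl_into_rtrancl)
  have r5: "(x, (-b,a-b)) \<in> Kstep\<^sup>*" using r4 s1(2)[of "(-b,-a)"] k by (metis rtrancl_into_rtrancl)
  have r6: "(x, (a,a-b)) \<in> Kstep\<^sup>*" using r5 s1(1)[of "(-b,a-b)"] k by (metis rtrancl_into_rtrancl)
  assume "y \<in> O6 x"
  then show ?thesis using r2 r3 r4 r5 r6 by (auto simp: x O6_def)
qed

lemma orbit_O6: "orbit x = O6 x"
  using orbit_sub orbit_sup unfolding orbit_def by blast

lemma O6_mem: "y \<in> O6 x \<Longrightarrow> O6 y = O6 x"
proof -
  obtain a b where x: "x = (a,b)" by (cases x)
  assume "y \<in> O6 x"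
  then have "y = (a,b) \<or> y = (b-a,b) \<or> y = (b-a,-a) \<or> y = (-b,-a) \<or> y = (-b,a-b) \<or> y = (a,a-b)"
    by (simp add: O6_def x)
  then show ?thesis
    apply (elim disjE)
    apply (simp_all add: O6_def x)
    apply blast+
    done
qed

lemma O6_self: "x \<in> O6 x"
  by (cases x) (simp add: O6_def)

lemma side_O6: "square_side (O6 x) = real_of_int (sfun x)"
proof -
  obtain a b where x: "x = (a,b)" by (cases x)
  have f: "fst ` O6 x = {a, b-a, -b}" "snd ` O6 x = {b, -a, a-b}"
    by (auto simp: O6_def x image_iff)
  have i: "max (max a (max (b-a) (-b)) - min a (min (b-a) (-b))) (max b (max (-a) (a-b)) - min b (min (-a) (a-b)))
     = max \<bar>a+b\<bar> (max \<bar>a-2*b\<bar> \<bar>b-2*a\<bar>)" by (simp add: max_def min_def abs_if split: if_splits)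
  have m: "Max {a, b-a, -b} = max a (max (b-a) (-b))" "Min {a, b-a, -b} = min a (min (b-a) (-b))"
     "Max {b, -a, a-b} = max b (max (-a) (a-b))" "Min {b, -a, a-b} = min b (min (-a) (a-b))"
    by (simp_all add: max.assoc min.assoc)
  show ?thesis unfolding square_side_def f m unfolding i by (simp add: sfun_def x)
qed


lemma L1: "2 * (\<bar>2*x1 - x2\<bar> + \<bar>x1 + x2\<bar> + \<bar>2*x2 - x1\<bar>) = 4 * max \<bar>x1+x2\<bar> (max \<bar>x1-2*x2\<bar> \<bar>x2-2*x1\<bar>)" for x1 x2 :: int
  by (simp add: max_def abs_if split: if_splits)
lemma L2: "u \<in> {a, b-a, -b} \<Longrightarrow> v \<in> {a, b-a, -b} \<Longrightarrow> \<bar>u - v\<bar> \<le> max \<bar>a+b\<bar> (max \<bar>a-2*b\<bar> \<bar>b-2*a\<bar>)" for a b u v :: int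
  by auto
lemma L3: "m = max \<bar>a+b\<bar> (max \<bar>a-2*b\<bar> \<bar>b-2*a\<bar>) \<Longrightarrow> m = \<bar>a+b\<bar> \<or> m = \<bar>2*b-a\<bar> \<or> m = \<bar>2*a-b\<bar>" for a b m :: int
  by (simp add: max_def abs_if)
lemma L2b: "u \<in> {b, -a, a-b} \<Longrightarrow> v \<in> {b, -a, a-b} \<Longrightarrow> \<bar>u - v\<bar> \<le> max \<bar>a+b\<bar> (max \<bar>a-2*b\<bar> \<bar>b-2*a\<bar>)" for a b u v :: int
  by auto
lemma sfun_nonneg: "0 \<le> sfun x"
  by (cases x) (simp add: sfun_def)

lemma fst_O6: "p \<in> O6 (a,b) \<Longrightarrow> fst p \<in> {a, b-a, -b}"
  by (auto simp: O6_def)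
lemma snd_O6: "p \<in> O6 (a,b) \<Longrightarrow> snd p \<in> {b, -a, a-b}"
  by (auto simp: O6_def)

lemma dist_bound:
  assumes "p \<in> O6 x" "q \<in> O6 x"
  shows "eucl_dist p q \<le> sqrt 2 * real_of_int (sfun x)"
proof -
  obtain a b where x: "x = (a,b)" by (cases x)
  have h1: "\<bar>fst p - fst q\<bar> \<le> sfun x"
    using L2[OF fst_O6[OF assms(1)[unfolded x]] fst_O6[OF assms(2)[unfolded x]]]
    by (simp add: sfun_def x)
  have h2: "\<bar>snd p - snd q\<bar> \<le> sfun x"
    using L2b[OF snd_O6[OF assms(1)[unfolded x]] snd_O6[OF assms(2)[unfolded x]]]
    by (simp add: sfun_def x)
  define s where "s = real_of_int (sfun x)"
  have s0: "0 \<le> s" using sfun_nonneg s_def by simp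
  have a1: "\<bar>real_of_int (fst p - fst q)\<bar> \<le> \<bar>s\<bar>"
    using h1 s0 unfolding s_def of_int_abs[symmetric] of_int_le_iff by simp
  have e1: "(real_of_int (fst p - fst q))\<^sup>2 \<le> s\<^sup>2"
    using a1 abs_le_square_iff by blast
  have a2: "\<bar>real_of_int (snd p - snd q)\<bar> \<le> \<bar>s\<bar>"
    using h2 s0 unfolding s_def of_int_abs[symmetric] of_int_le_iff by simp
  have e2: "(real_of_int (snd p - snd q))\<^sup>2 \<le> s\<^sup>2"
    using a2 abs_le_square_iff by blast
  have "eucl_dist p q \<le> sqrt (2 * s\<^sup>2)"
    unfolding eucl_dist_def using e1 e2 by (intro real_sqrt_le_mono) linarith
  also have "\<dots> = sqrt 2 * s" using s0 by (simp add: real_sqrt_mult)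
  finally show ?thesis by (simp add: s_def)
qed

lemma dist_diag: "fst p - fst q = d \<Longrightarrow> snd p - snd q = d \<Longrightarrow> eucl_dist p q = sqrt 2 * real_of_int \<bar>d\<bar>"
proof -
  assume "fst p - fst q = d" "snd p - snd q = d"
  then have "eucl_dist p q = sqrt (2 * (real_of_int d)\<^sup>2)" by (simp add: eucl_dist_def)
  also have "\<dots> = sqrt 2 * real_of_int \<bar>d\<bar>" by (simp add: real_sqrt_mult)
  finally show ?thesis .
qed

lemma diam_O6: "diamE (O6 x) = sqrt 2 * real_of_int (sfun x)"
proof -
  obtain a b where x: "x = (a,b)" by (cases x)
  let ?D = "{eucl_dist p q | p q. p \<in> O6 x \<and> q \<in> O6 x}"
  have fin: "finite ?D"
  proof -
    have "?D = (\<lambda>(p,q). eucl_dist p q) ` (O6 x \<times> O6 x)" by auto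
    moreover have "finite (O6 x)" by (simp add: O6_def x)
    ultimately show ?thesis by simp
  qed
  have mem: "sqrt 2 * real_of_int (sfun x) \<in> ?D"
  proof -
    have m: "(a,b) \<in> O6 x" "(-b,-a) \<in> O6 x" "(b-a,b) \<in> O6 x" "(-b,a-b) \<in> O6 x"
      "(a,a-b) \<in> O6 x" "(b-a,-a) \<in> O6 x" by (simp_all add: O6_def x)
    have d1: "eucl_dist (a,b) (-b,-a) = sqrt 2 * real_of_int \<bar>a+b\<bar>" by (rule dist_diag) auto
    have d2: "eucl_dist (b-a,b) (-b,a-b) = sqrt 2 * real_of_int \<bar>2*b-a\<bar>" by (rule dist_diag) auto
    have d3: "eucl_dist (a,a-b) (b-a,-a) = sqrt 2 * real_of_int \<bar>2*a-b\<bar>" by (rule dist_diag) auto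
    have dj: "sfun x = \<bar>a+b\<bar> \<or> sfun x = \<bar>2*b-a\<bar> \<or> sfun x = \<bar>2*a-b\<bar>"
      using L3[of "sfun x" a b] by (simp add: sfun_def x)
    have md: "sqrt 2 * real_of_int \<bar>a+b\<bar> \<in> ?D" "sqrt 2 * real_of_int \<bar>2*b-a\<bar> \<in> ?D"
       "sqrt 2 * real_of_int \<bar>2*a-b\<bar> \<in> ?D"
      using m d1[symmetric] d2[symmetric] d3[symmetric] by blast+
    show ?thesis using dj md by (elim disjE) simp_all
  qed
  show ?thesis unfolding diamE_def
  proof (rule Max_eqI[OF fin])
    fix y assume "y \<in> ?D"
    then obtain p q where "p \<in> O6 x" "q \<in> O6 x" "y = eucl_dist p q" by blast
    then show "y \<le> sqrt 2 * real_of_int (sfun x)" using dist_bound by blast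
  qed (rule mem)
qed

lemma len_id: "2 * (\<bar>2*x1 - x2\<bar> + \<bar>x1 + x2\<bar> + \<bar>2*x2 - x1\<bar>) = 4 * sfun (x1,x2)"
  using L1 by (simp add: sfun_def)

lemma length_O6: "orbit_length (O6 x) = 4 * real_of_int (sfun x)"
proof -
  obtain a b where x: "x = (a,b)" by (cases x)
  show ?thesis unfolding orbit_length_def
  proof (rule the_equality)
    show "\<exists>x1 x2. O6 x = orbit (x1, x2) \<and> 4 * real_of_int (sfun x) =
        real_of_int (2 * (\<bar>2 * x1 - x2\<bar> + \<bar>x1 + x2\<bar> + \<bar>2 * x2 - x1\<bar>))"
      by (rule exI[of _ a], rule exI[of _ b]) (simp only: orbit_O6 x len_id, simp)
  next
    fix l assume "\<exists>x1 x2. O6 x = orbit (x1, x2) \<and> l =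
        real_of_int (2 * (\<bar>2 * x1 - x2\<bar> + \<bar>x1 + x2\<bar> + \<bar>2 * x2 - x1\<bar>))"
    then obtain x1 x2 where o: "O6 x = O6 (x1,x2)" and l: "l = real_of_int (4 * sfun (x1,x2))"
      unfolding orbit_O6 len_id by blast
    have "sfun x = sfun (x1,x2)" using side_O6[of x] side_O6[of "(x1,x2)"] o by simp
    then show "l = 4 * real_of_int (sfun x)" using l by simp
  qed
qed

definition IA :: "nat \<Rightarrow> (nat \<times> nat) set" where "IA M = (SIGMA N:{..M}. {..N div 2})"
definition IB :: "nat \<Rightarrow> (nat \<times> nat) set" where "IB M = (SIGMA N:{..M}. {1..N div 2})"
definition fA :: "nat \<times> nat \<Rightarrow> pt" where "fA p = (int (snd p), int (fst p))"
definition fB :: "nat \<times> nat \<Rightarrow> pt" where "fB p = (int (fst p), int (snd p))"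
definition RR :: "nat \<Rightarrow> pt set" where "RR M = fA ` IA M \<union> fB ` IB M"

lemma div2_le: "k \<le> N div 2 \<longleftrightarrow> 2 * k \<le> (N::nat)"
  by presburger

lemma RR_iff: "(a,b) \<in> RR M \<longleftrightarrow>
   (0 \<le> 2*a \<and> 2*a \<le> b \<and> b \<le> int M) \<or> (0 < b \<and> 2*b \<le> a \<and> a \<le> int M)"
proof
  assume "(a,b) \<in> RR M"
  then show "(0 \<le> 2*a \<and> 2*a \<le> b \<and> b \<le> int M) \<or> (0 < b \<and> 2*b \<le> a \<and> a \<le> int M)"
    unfolding RR_def IA_def IB_def fA_def fB_def by (auto simp: div2_le)
next
  assume h: "(0 \<le> 2*a \<and> 2*a \<le> b \<and> b \<le> int M) \<or> (0 < b \<and> 2*b \<le> a \<and> a \<le> int M)"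
  show "(a,b) \<in> RR M"
  proof (cases "0 \<le> 2*a \<and> 2*a \<le> b \<and> b \<le> int M")
    case True
    then have "(nat b, nat a) \<in> IA M" unfolding IA_def by (auto simp: div2_le)
    moreover have "(a,b) = fA (nat b, nat a)" using True by (simp add: fA_def)
    ultimately show ?thesis unfolding RR_def by blast
  next
    case False
    with h have h2: "0 < b \<and> 2*b \<le> a \<and> a \<le> int M" by blast
    then have "(nat a, nat b) \<in> IB M" unfolding IB_def by (auto simp: div2_le)
    moreover have "(a,b) = fB (nat a, nat b)" using h2 by (simp add: fB_def)
    ultimately show ?thesis unfolding RR_def by blast
  qed
qed

lemma RR_sq: "RR M \<subseteq> {0..int M} \<times> {0..int M}"
proof
  fix x assume "x \<in> RR M"
  moreover obtain a b where x: "x = (a,b)" by (cases x)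
  ultimately show "x \<in> {0..int M} \<times> {0..int M}" using RR_iff[of a b M] by auto
qed

lemma cover:
  assumes "x \<in> {0..int M} \<times> {0..int M}"
  shows "\<exists>r\<in>RR M. r \<in> O6 x"
proof -
  obtain a b where x: "x = (a,b)" by (cases x)
  have a: "0 \<le> a" "a \<le> int M" and b: "0 \<le> b" "b \<le> int M" using assms x by auto
  have m: "(a,b) \<in> O6 x" "(b-a,b) \<in> O6 x" "(-b,a-b) \<in> O6 x" "(a,a-b) \<in> O6 x"
    by (simp_all add: O6_def x)
  show ?thesis
  proof (cases "a \<le> b")
    case True
    show ?thesis
    proof (cases "2*a \<le> b")
      case True
      then have "(a,b) \<in> RR M" using a b by (simp add: RR_iff)
      then show ?thesis using m by blast
    next
      case False
      then have "(b-a,b) \<in> RR M" using a b \<open>a \<le> b\<close> by (simp add: RR_iff)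
      then show ?thesis using m by blast
    qed
  next
    case False
    show ?thesis
    proof (cases "b = 0")
      case True
      then have "(-b,a-b) \<in> RR M" using a b by (simp add: RR_iff)
      then show ?thesis using m by blast
    next
      case b0: False
      show ?thesis
      proof (cases "2*b \<le> a")
        case True
        then have "(a,b) \<in> RR M" using a b b0 by (simp add: RR_iff)
        then show ?thesis using m by blast
      next
        case c: False
        then have "(a,a-b) \<in> RR M" using a b b0 \<open>\<not> a \<le> b\<close> by (simp add: RR_iff)
        then show ?thesis using m by blast
      qed
    qed
  qed
qed

lemma RR_inj_aux:
  assumes r: "(a,b) \<in> RR M" and r': "(c,d) \<in> RR M" and m: "(c,d) \<in> O6 (a,b)"
  shows "(c,d) = (a,b)"
proof -
  have A: "(0 \<le> 2*a \<and> 2*a \<le> b \<and> b \<le> int M) \<or> (0 < b \<and> 2*b \<le> a \<and> a \<le> int M)"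
    using r RR_iff by blast
  have B: "(0 \<le> 2*c \<and> 2*c \<le> d \<and> d \<le> int M) \<or> (0 < d \<and> 2*d \<le> c \<and> c \<le> int M)"
    using r' RR_iff by blast
  from m have "(c = a \<and> d = b) \<or> (c = b-a \<and> d = b) \<or> (c = b-a \<and> d = -a) \<or> (c = -b \<and> d = -a)
     \<or> (c = -b \<and> d = a-b) \<or> (c = a \<and> d = a-b)"
    by (simp add: O6_def)
  then show ?thesis using A B by (elim disjE) auto
qed

lemma RR_inj: "inj_on O6 (RR M)"
proof (rule inj_onI)
  fix x y assume x: "x \<in> RR M" and y: "y \<in> RR M" and e: "O6 x = O6 y"
  obtain a b where xa: "x = (a,b)" by (cases x)
  obtain c d where yc: "y = (c,d)" by (cases y)
  have "y \<in> O6 x" using e O6_self[of y] by simp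
  then show "x = y" using RR_inj_aux[of a b M c d] x y xa yc by simp
qed

lemma orbits_eq: "orbits M = O6 ` RR M"
proof
  show "orbits M \<subseteq> O6 ` RR M"
  proof
    fix o' assume "o' \<in> orbits M"
    then obtain x where x: "x \<in> {0..int M} \<times> {0..int M}" and o: "o' = O6 x"
      unfolding orbits_def orbit_O6 by blast
    obtain r where "r \<in> RR M" "r \<in> O6 x" using cover[OF x] by blast
    then show "o' \<in> O6 ` RR M" using o O6_mem by blast
  qed
next
  show "O6 ` RR M \<subseteq> orbits M"
    unfolding orbits_def orbit_O6[abs_def] using RR_sq by blast
qed

lemma avg_RR: "avg_orbits f M = (\<Sum>r\<in>RR M. f (O6 r)) / real (card (RR M))"
  unfolding avg_orbits_def orbits_eq
  by (simp add: sum.reindex[OF RR_inj] card_image[OF RR_inj])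

lemma fin_IA: "finite (IA M)" by (simp add: IA_def)
lemma fin_IB: "finite (IB M)" by (simp add: IB_def)
lemma inj_fA: "inj_on fA X" by (rule inj_onI) (auto simp: fA_def prod_eq_iff)
lemma inj_fB: "inj_on fB X" by (rule inj_onI) (auto simp: fB_def prod_eq_iff)
lemma disj_AB: "fA ` IA M \<inter> fB ` IB M = {}"
  by (auto simp: IA_def IB_def fA_def fB_def div2_le)

lemma sfun_A: "2*k \<le> N \<Longrightarrow> sfun (fA (N,k)) = 2 * int N - int k"
  by (simp add: sfun_def fA_def max_def abs_if)
lemma sfun_B: "1 \<le> k \<Longrightarrow> 2*k \<le> N \<Longrightarrow> sfun (fB (N,k)) = 2 * int N - int k"
  by (simp add: sfun_def fB_def max_def abs_if)

definition rowS :: "nat \<Rightarrow> real" where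
  "rowS N = (\<Sum>k\<le>N div 2. 2 * real N - real k) + (\<Sum>k\<in>{1..N div 2}. 2 * real N - real k)"

lemma sum_RR: "(\<Sum>r\<in>RR M. real_of_int (sfun r)) = (\<Sum>N\<le>M. rowS N)"
proof -
  have "(\<Sum>r\<in>RR M. real_of_int (sfun r)) =
      (\<Sum>r\<in>fA ` IA M. real_of_int (sfun r)) + (\<Sum>r\<in>fB ` IB M. real_of_int (sfun r))"
    unfolding RR_def by (rule sum.union_disjoint) (auto simp: fin_IA fin_IB disj_AB)
  also have "(\<Sum>r\<in>fA ` IA M. real_of_int (sfun r)) = (\<Sum>p\<in>IA M. real_of_int (sfun (fA p)))"
    by (simp add: sum.reindex[OF inj_fA])
  also have "\<dots> = (\<Sum>p\<in>IA M. 2 * real (fst p) - real (snd p))"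
    by (rule sum.cong) (auto simp: IA_def div2_le sfun_A)
  also have "\<dots> = (\<Sum>N\<le>M. \<Sum>k\<le>N div 2. 2 * real N - real k)"
    unfolding IA_def by (subst sum.Sigma) (auto simp: case_prod_unfold)
  also have "(\<Sum>r\<in>fB ` IB M. real_of_int (sfun r)) = (\<Sum>p\<in>IB M. real_of_int (sfun (fB p)))"
    by (simp add: sum.reindex[OF inj_fB])
  also have "\<dots> = (\<Sum>p\<in>IB M. 2 * real (fst p) - real (snd p))"
    by (rule sum.cong) (auto simp: IB_def div2_le sfun_B)
  also have "\<dots> = (\<Sum>N\<le>M. \<Sum>k\<in>{1..N div 2}. 2 * real N - real k)"
    unfolding IB_def by (subst sum.Sigma) (auto simp: case_prod_unfold)
  finally show ?thesis by (simp add: rowS_def sum.distrib)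
qed

lemma card_RR: "real (card (RR M)) = (\<Sum>N\<le>M. 2 * real (N div 2) + 1)"
proof -
  have "card (RR M) = card (fA ` IA M) + card (fB ` IB M)"
    unfolding RR_def by (rule card_Un_disjoint) (auto simp: fin_IA fin_IB disj_AB)
  also have "\<dots> = card (IA M) + card (IB M)"
    by (simp add: card_image[OF inj_fA] card_image[OF inj_fB])
  also have "card (IA M) = (\<Sum>N\<le>M. N div 2 + 1)" unfolding IA_def by (subst card_SigmaI) auto
  also have "card (IB M) = (\<Sum>N\<le>M. N div 2)" unfolding IB_def by (subst card_SigmaI) auto
  finally have "card (RR M) = (\<Sum>N\<le>M. N div 2 + 1) + (\<Sum>N\<le>M. N div 2)" .
  also have "\<dots> = (\<Sum>N\<le>M. 2 * (N div 2) + 1)" by (simp add: sum.distrib[symmetric] mult_2)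
  finally show ?thesis by (simp add: add.commute)
qed

lemma gA: "(\<Sum>k\<le>h. c - real k) = (real h + 1) * c - real h * (real h + 1) / 2"
  by (induction h) (simp_all add: field_simps)
lemma gB: "(\<Sum>k\<in>{1..h}. c - real k) = real h * c - real h * (real h + 1) / 2"
  by (induction h) (simp_all add: field_simps)

lemma rowS_bound: "7/4 * (real N)^2 \<le> rowS N \<and> rowS N \<le> 7/4 * (real N)^2 + 2 * real N"
proof -
  define h where "h = N div 2"
  have r: "rowS N = (real h + 1) * (2 * real N) - real h * (real h + 1) / 2
      + (real h * (2 * real N) - real h * (real h + 1) / 2)"
    unfolding rowS_def gA gB h_def by simp
  have "N = 2*h \<or> N = 2*h+1" unfolding h_def by presburger
  then show ?thesis
  proof
    assume n: "N = 2*h"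
    have "rowS N = 7/4 * (real N)^2 + 3 * real h" by (subst r) (simp add: n field_simps power2_eq_square)
    then show ?thesis using n by simp
  next
    assume n: "N = 2*h+1"
    have "rowS N = 7/4 * (real N)^2 + 1/4" by (subst r) (simp add: n field_simps power2_eq_square)
    then show ?thesis using n by simp
  qed
qed

lemma cnt_bound: "real N \<le> 2 * real (N div 2) + 1 \<and> 2 * real (N div 2) + 1 \<le> real N + 1"
proof -
  define h where "h = N div 2"
  have "N = 2*h \<or> N = 2*h+1" unfolding h_def by presburger
  then show ?thesis unfolding h_def[symmetric] by (elim disjE) simp_all
qed

lemma sumN: "(\<Sum>N\<le>M. real N) = real M * (real M + 1) / 2"
  by (induction M) (simp_all add: field_simps)
lemma sumN2: "(\<Sum>N\<le>M. (real N)^2) = real M * (real M + 1) * (2 * real M + 1) / 6"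
  by (induction M) (simp_all add: field_simps power2_eq_square)

lemma real_ineq:
  fixes m S n :: real
  assumes m: "1 \<le> m"
    and S1: "7/4 * (m * (m + 1) * (2 * m + 1) / 6) \<le> S"
    and S2: "S \<le> 7/4 * (m * (m + 1) * (2 * m + 1) / 6) + m * (m + 1)"
    and n1: "m * (m + 1) / 2 \<le> n" and n2: "n \<le> m * (m + 1) / 2 + m + 1"
  shows "\<bar>S / n - 7/6 * m\<bar> \<le> 4"
proof -
  have mp: "0 \<le> m" using m by simp
  have "0 < m * (m + 1)" using m by (intro mult_pos_pos) auto
  then have np: "0 < n" using n1 by linarith
  have p1: "m * (m * (m + 1) / 2) \<le> m * n" using mult_left_mono[OF n1 mp] .
  have p2: "m * n \<le> m * (m * (m + 1) / 2 + m + 1)" using mult_left_mono[OF n2 mp] .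
  have up: "S - 7/6 * m * n \<le> 4 * n"
  proof -
    have "S - 7/6 * m * n \<le> 7/4 * (m * (m + 1) * (2 * m + 1) / 6) + m * (m + 1) - 7/6 * (m * (m * (m + 1) / 2))"
      using S2 p1 by linarith
    also have "\<dots> = 31/24 * (m * (m+1))" by (simp add: field_simps)
    also have "\<dots> \<le> 4 * (m * (m + 1) / 2)" using mp by (simp add: field_simps)
    also have "\<dots> \<le> 4 * n" using n1 by simp
    finally show ?thesis .
  qed
  have lo: "- (4 * n) \<le> S - 7/6 * m * n"
  proof -
    have "- (4 * n) \<le> - (4 * (m * (m + 1) / 2))" using n1 by simp
    also have "\<dots> \<le> - 7/8 * (m * (m+1))" using mp by (simp add: field_simps)
    also have "\<dots> = 7/4 * (m * (m + 1) * (2 * m + 1) / 6) - 7/6 * (m * (m * (m + 1) / 2 + m + 1))"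
      by (simp add: field_simps)
    also have "\<dots> \<le> S - 7/6 * m * n" using S1 p2 by linarith
    finally show ?thesis .
  qed
  have "S / n - 7/6 * m = (S - 7/6 * m * n) / n" using np by (simp add: field_simps)
  moreover have "\<bar>S - 7/6 * m * n\<bar> \<le> 4 * n" using up lo by linarith
  ultimately show ?thesis using np by (simp add: abs_divide divide_le_eq)
qed

lemma side_main: "1 \<le> M \<Longrightarrow> \<bar>avg_orbits square_side M - 7 / 6 * real M\<bar> \<le> 4"
proof -
  assume M: "1 \<le> M"
  have a: "avg_orbits square_side M = (\<Sum>N\<le>M. rowS N) / (\<Sum>N\<le>M. 2 * real (N div 2) + 1)"
    unfolding avg_RR side_O6 sum_RR card_RR ..
  have S1: "(\<Sum>N\<le>M. 7/4 * (real N)^2) \<le> (\<Sum>N\<le>M. rowS N)"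
    by (rule sum_mono) (use rowS_bound in blast)
  have S2: "(\<Sum>N\<le>M. rowS N) \<le> (\<Sum>N\<le>M. 7/4 * (real N)^2 + 2 * real N)"
    by (rule sum_mono) (use rowS_bound in blast)
  have n1: "(\<Sum>N\<le>M. real N) \<le> (\<Sum>N\<le>M. 2 * real (N div 2) + 1)"
    by (rule sum_mono) (use cnt_bound in blast)
  have n2: "(\<Sum>N\<le>M. 2 * real (N div 2) + 1) \<le> (\<Sum>N\<le>M. real N + 1)"
    by (rule sum_mono) (use cnt_bound in blast)
  have e1: "(\<Sum>N\<le>M. 7/4 * (real N)^2) = 7/4 * (real M * (real M + 1) * (2 * real M + 1) / 6)"
    unfolding sum_distrib_left[symmetric] sumN2 ..
  have e2: "(\<Sum>N\<le>M. 7/4 * (real N)^2 + 2 * real N) =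
      7/4 * (real M * (real M + 1) * (2 * real M + 1) / 6) + real M * (real M + 1)"
    unfolding sum.distrib sum_distrib_left[symmetric] sumN2 sumN by simp
  have e3: "(\<Sum>N\<le>M. real N + 1) = real M * (real M + 1) / 2 + real M + 1"
    by (simp add: sum.distrib sumN)
  show ?thesis unfolding a
    by (rule real_ineq) (use M S1 S2 n1 n2 e1 e2 e3 sumN in auto)
qed

theorem mainTheorem17:
  shows "(\<exists>C. \<forall>M::nat. M \<ge> 1 \<longrightarrow>
            \<bar>avg_orbits diamE M - 7 * sqrt 2 / 6 * real M\<bar> \<le> C)
       \<and> (\<exists>C. \<forall>M::nat. M \<ge> 1 \<longrightarrow>
            \<bar>avg_orbits square_side M - 7 / 6 * real M\<bar> \<le> C)
       \<and> (\<exists>C. \<forall>M::nat. M \<ge> 1 \<longrightarrow>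
            \<bar>avg_orbits orbit_length M - 14 / 3 * real M\<bar> \<le> C)"
proof (intro conjI)
  have d: "avg_orbits diamE M = sqrt 2 * avg_orbits square_side M" for M
    unfolding avg_RR diam_O6 side_O6 by (simp add: sum_distrib_left)
  have l: "avg_orbits orbit_length M = 4 * avg_orbits square_side M" for M
    unfolding avg_RR length_O6 side_O6 by (simp add: sum_distrib_left)
  show "\<exists>C. \<forall>M::nat. M \<ge> 1 \<longrightarrow> \<bar>avg_orbits square_side M - 7 / 6 * real M\<bar> \<le> C"
    using side_main by blast
  show "\<exists>C. \<forall>M::nat. M \<ge> 1 \<longrightarrow> \<bar>avg_orbits diamE M - 7 * sqrt 2 / 6 * real M\<bar> \<le> C"
  proof (intro exI allI impI)
    fix M :: nat assume M: "M \<ge> 1"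
    have "avg_orbits diamE M - 7 * sqrt 2 / 6 * real M = sqrt 2 * (avg_orbits square_side M - 7 / 6 * real M)"
      unfolding d by (simp add: algebra_simps)
    then have "\<bar>avg_orbits diamE M - 7 * sqrt 2 / 6 * real M\<bar> = sqrt 2 * \<bar>avg_orbits square_side M - 7 / 6 * real M\<bar>"
      by (simp add: abs_mult)
    also have "\<dots> \<le> sqrt 2 * 4" using side_main[OF M] by (simp add: mult_left_mono)
    finally show "\<bar>avg_orbits diamE M - 7 * sqrt 2 / 6 * real M\<bar> \<le> sqrt 2 * 4" .
  qed
  show "\<exists>C. \<forall>M::nat. M \<ge> 1 \<longrightarrow> \<bar>avg_orbits orbit_length M - 14 / 3 * real M\<bar> \<le> C"
  proof (intro exI allI impI)
    fix M :: nat assume M: "M \<ge> 1"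
    have eq: "avg_orbits orbit_length M - 14 / 3 * real M = 4 * (avg_orbits square_side M - 7 / 6 * real M)"
      unfolding l by (simp add: algebra_simps)
    have "\<bar>avg_orbits orbit_length M - 14 / 3 * real M\<bar> = 4 * \<bar>avg_orbits square_side M - 7 / 6 * real M\<bar>"
      by (subst eq, subst abs_mult) simp
    also have "\<dots> \<le> 4 * 4" using side_main[OF M] by simp
    finally show "\<bar>avg_orbits orbit_length M - 14 / 3 * real M\<bar> \<le> 4 * 4" .
  qed
qed

end
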